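(* Let $X_1$ and $X_2$ be finite sets of quantifier-free first-order clauses, and let $\pi(X_1)$ be the set of prime implicates of $X_1$. If $C_1$ and $C_2$ are implicates of $\pi(X_1)\cup X_2$ and their consensus $CON(C_1,C_2)$ is defined, then $CON(C_1,C_2)$ is an implicate of $X_1\cup X_2$.
   Context: The setting is first-order logic without equality. A literal is an atom or a negated atom. A clause is a finite disjunction of literals, also viewed as a finite set of literals, and all its variables are implicitly universally quantified. A formula (knowledge base) is a finite conjunction, equivalently a finite set, of clauses. A clause is fundamental if it does not contain a literal together with its negation; all clauses considered are assumed fundamental. $\models$ denotes first-order logical consequence. Clause $C_1$ subsumes clause $C_2$ iff there is a substitution $\sigma$ with $C_1\sigma\subseteq C_2$. A clause $C$ is an implicate of a set of clauses $X$ if $X\sigma\models C$ for some substitution $\sigma$. A prime implicate of $X$ is an implicate of $X$ that is not subsumed by any other implicate of $X$. $\pi(X)$ denotes the set of prime implicates of $X$. Two literals $r,s$ are complementary if $\{r,\neg s\}$ is unifiable; its most general unifier $\sigma$ is the complementary substitution. For clauses $C_1\ni r$ and $C_2\ni s$ with $r,s$ complementary via mgu $\sigma$ (so $r\sigma=t$ and $s\sigma=\neg t$), the resolvent is $[(C_1-\{r\})\cup(C_2-\{s\})]\sigma=(C_1\sigma-\{t\})\cup(C_2\sigma-\{\neg t\})$. If this resolvent is fundamental it is called the consensus $CON(C_1,C_2)$, and it is said to be associated with $\sigma$. Each original clause of a set is associated with the empty substitution. If $C_1,C_2$ are associated with $\sigma_1,\sigma_2$, their consensus with respect to $\sigma$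 is defined only when $\sigma_1\sigma=\sigma_2\sigma$. In that case it is the propositional consensus of $C_1\sigma$ and $C_2\sigma$, and it is associated with $\sigma_1\sigma=\sigma_2\sigma$. *)

theory Defs
  imports Main
begin

datatype ('f, 'v) trm = Var 'v | Fn 'f "('f, 'v) trm list"

datatype ('p, 'f, 'v) lit = Pos 'p "('f, 'v) trm list" | Neg 'p "('f, 'v) trm list"

type_synonym ('p, 'f, 'v) clause = "('p, 'f, 'v) lit set"

type_synonym ('f, 'v) subst = "'v \<Rightarrow> ('f, 'v) trm"

fun trm_subst :: "('f, 'v) subst \<Rightarrow> ('f, 'v) trm \<Rightarrow> ('f, 'v) trm" where
  "trm_subst \<sigma> (Var x) = \<sigma> x"
| "trm_subst \<sigma> (Fn f ts) = Fn f (map (trm_subst \<sigma>) ts)"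

fun lit_subst :: "('f, 'v) subst \<Rightarrow> ('p, 'f, 'v) lit \<Rightarrow> ('p, 'f, 'v) lit" where
  "lit_subst \<sigma> (Pos p ts) = Pos p (map (trm_subst \<sigma>) ts)"
| "lit_subst \<sigma> (Neg p ts) = Neg p (map (trm_subst \<sigma>) ts)"

definition clause_subst :: "('f, 'v) subst \<Rightarrow> ('p, 'f, 'v) clause \<Rightarrow> ('p, 'f, 'v) clause" where
  "clause_subst \<sigma> C = lit_subst \<sigma> ` C"

definition clauses_subst :: "('f, 'v) subst \<Rightarrow> ('p, 'f, 'v) clause set \<Rightarrow> ('p, 'f, 'v) clause set" where
  "clauses_subst \<sigma> X = clause_subst \<sigma> ` X"

text \<open>Composition: apply \<sigma> first, then \<tau> (written \<sigma>\<tau> in the paper).\<close>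
definition subst_comp :: "('f, 'v) subst \<Rightarrow> ('f, 'v) subst \<Rightarrow> ('f, 'v) subst" where
  "subst_comp \<sigma> \<tau> = (\<lambda>x. trm_subst \<tau> (\<sigma> x))"

fun negate :: "('p, 'f, 'v) lit \<Rightarrow> ('p, 'f, 'v) lit" where
  "negate (Pos p ts) = Neg p ts"
| "negate (Neg p ts) = Pos p ts"

definition fundamental :: "('p, 'f, 'v) clause \<Rightarrow> bool" where
  "fundamental C \<longleftrightarrow> (\<forall>l\<in>C. negate l \<notin> C)"

definition is_clause :: "('p, 'f, 'v) clause \<Rightarrow> bool" where
  "is_clause C \<longleftrightarrow> finite C \<and> fundamental C"

definition lit_unifier :: "('f, 'v) subst \<Rightarrow> ('p, 'f, 'v) lit \<Rightarrow> ('p, 'f, 'v) lit \<Rightarrow> bool" where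
  "lit_unifier \<sigma> l1 l2 \<longleftrightarrow> lit_subst \<sigma> l1 = lit_subst \<sigma> l2"

definition lit_mgu :: "('f, 'v) subst \<Rightarrow> ('p, 'f, 'v) lit \<Rightarrow> ('p, 'f, 'v) lit \<Rightarrow> bool" where
  "lit_mgu \<sigma> l1 l2 \<longleftrightarrow> lit_unifier \<sigma> l1 l2 \<and>
     (\<forall>\<tau>. lit_unifier \<tau> l1 l2 \<longrightarrow> (\<exists>\<rho>. \<tau> = subst_comp \<sigma> \<rho>))"

definition complementary_via :: "('f, 'v) subst \<Rightarrow> ('p, 'f, 'v) lit \<Rightarrow> ('p, 'f, 'v) lit \<Rightarrow> bool" where
  "complementary_via \<sigma> r s \<longleftrightarrow> lit_mgu \<sigma> r (negate s)"

text \<open>Resolvent [(C1 - {r}) \<union> (C2 - {s})]\<sigma> = (C1\<sigma> - {t}) \<union> (C2\<sigma> - {\<not>t}), t = r\<sigma>.\<close>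
definition resolvent ::
  "('f, 'v) subst \<Rightarrow> ('p, 'f, 'v) clause \<Rightarrow> ('p, 'f, 'v) lit \<Rightarrow> ('p, 'f, 'v) clause \<Rightarrow> ('p, 'f, 'v) lit
   \<Rightarrow> ('p, 'f, 'v) clause" where
  "resolvent \<sigma> C1 r C2 s =
     (clause_subst \<sigma> C1 - {lit_subst \<sigma> r}) \<union> (clause_subst \<sigma> C2 - {negate (lit_subst \<sigma> r)})"

text \<open>Domains are nonempty subsets of a type whose cardinality is at least that of the
  language plus aleph0; by downward Loewenheim-Skolem (without equality) this captures
  first-order consequence exactly.\<close>
type_synonym ('p, 'f, 'v) univ = "'f + 'p + 'v + nat"

definition wf_interp :: "'u set \<Rightarrow> ('f \<Rightarrow> 'u list \<Rightarrow> 'u) \<Rightarrow> bool" where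
  "wf_interp D F \<longleftrightarrow> D \<noteq> {} \<and> (\<forall>f us. set us \<subseteq> D \<longrightarrow> F f us \<in> D)"

fun eval_trm :: "('f \<Rightarrow> 'u list \<Rightarrow> 'u) \<Rightarrow> ('v \<Rightarrow> 'u) \<Rightarrow> ('f, 'v) trm \<Rightarrow> 'u" where
  "eval_trm F e (Var x) = e x"
| "eval_trm F e (Fn f ts) = F f (map (eval_trm F e) ts)"

fun eval_lit :: "('f \<Rightarrow> 'u list \<Rightarrow> 'u) \<Rightarrow> ('p \<Rightarrow> 'u list \<Rightarrow> bool) \<Rightarrow> ('v \<Rightarrow> 'u)
                  \<Rightarrow> ('p, 'f, 'v) lit \<Rightarrow> bool" where
  "eval_lit F R e (Pos p ts) = R p (map (eval_trm F e) ts)"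
| "eval_lit F R e (Neg p ts) = (\<not> R p (map (eval_trm F e) ts))"

definition sat_clause :: "'u set \<Rightarrow> ('f \<Rightarrow> 'u list \<Rightarrow> 'u) \<Rightarrow> ('p \<Rightarrow> 'u list \<Rightarrow> bool)
                          \<Rightarrow> ('p, 'f, 'v) clause \<Rightarrow> bool" where
  "sat_clause D F R C \<longleftrightarrow> (\<forall>e. range e \<subseteq> D \<longrightarrow> (\<exists>l\<in>C. eval_lit F R e l))"

definition entails :: "('p, 'f, 'v) clause set \<Rightarrow> ('p, 'f, 'v) clause \<Rightarrow> bool" where
  "entails X C \<longleftrightarrow>
     (\<forall>(D :: ('p, 'f, 'v) univ set) F R. wf_interp D F \<longrightarrow>
        (\<forall>c\<in>X. sat_clause D F R c) \<longrightarrow> sat_clause D F R C)"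

definition subsumes :: "('p, 'f, 'v) clause \<Rightarrow> ('p, 'f, 'v) clause \<Rightarrow> bool" where
  "subsumes C1 C2 \<longleftrightarrow> (\<exists>\<sigma>. clause_subst \<sigma> C1 \<subseteq> C2)"

definition implicate_via :: "('p, 'f, 'v) clause set \<Rightarrow> ('f, 'v) subst \<Rightarrow> ('p, 'f, 'v) clause \<Rightarrow> bool" where
  "implicate_via X \<sigma> C \<longleftrightarrow> is_clause C \<and> entails (clauses_subst \<sigma> X) C"

definition implicate :: "('p, 'f, 'v) clause set \<Rightarrow> ('p, 'f, 'v) clause \<Rightarrow> bool" where
  "implicate X C \<longleftrightarrow> (\<exists>\<sigma>. implicate_via X \<sigma> C)"

text \<open>Prime: not strictly subsumed by another implicate (variants count as the same clause).\<close>
definition prime_implicate :: "('p, 'f, 'v) clause set \<Rightarrow> ('p, 'f, 'v) clause \<Rightarrow> bool" where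
  "prime_implicate X C \<longleftrightarrow> implicate X C \<and>
     (\<forall>D. implicate X D \<and> subsumes D C \<longrightarrow> subsumes C D)"

definition prime_implicates :: "('p, 'f, 'v) clause set \<Rightarrow> ('p, 'f, 'v) clause set" ("\<pi>") where
  "\<pi> X = {C. prime_implicate X C}"

end

theory Submission
  imports Defs
begin

lemma trm_subst_Var: "trm_subst Var t = t"
proof (induction t)
  case (Fn f ts) then show ?case by (simp add: map_idI)
qed simp

lemma lit_subst_Var: "lit_subst Var l = l"
  by (cases l) (simp_all add: trm_subst_Var map_idI)

lemma eval_trm_in:
  assumes "wf_interp D F" "range e \<subseteq> D"
  shows "eval_trm F e t \<in> D"
proof (induction t)
  case (Var x) then show ?case using assms(2) by auto
next
  case (Fn f ts)
  then have "set (map (eval_trm F e) ts) \<subseteq> D" by auto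
  then show ?case using assms(1) unfolding wf_interp_def by auto
qed

lemma eval_trm_subst:
  "eval_trm F e (trm_subst \<tau> t) = eval_trm F (\<lambda>x. eval_trm F e (\<tau> x)) t"
  by (induction t) (auto cong: map_cong)

lemma eval_lit_subst:
  "eval_lit F R e (lit_subst \<tau> l) = eval_lit F R (\<lambda>x. eval_trm F e (\<tau> x)) l"
  by (cases l) (auto simp: eval_trm_subst comp_def)

lemma eval_lit_negate: "eval_lit F R e (negate l) = (\<not> eval_lit F R e l)"
  by (cases l) auto

lemma sat_subst:
  fixes \<tau> :: "('f,'v) subst" and C :: "('p,'f,'v) clause" and D :: "'u set"
  assumes "wf_interp D F" "sat_clause D F R C"
  shows "sat_clause D F R (clause_subst \<tau> C)"
  unfolding sat_clause_def
proof (intro allI impI)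
  fix e :: "'v \<Rightarrow> 'u" assume e: "range e \<subseteq> D"
  have "range (\<lambda>x. eval_trm F e (\<tau> x)) \<subseteq> D" using eval_trm_in[OF assms(1) e] by auto
  then obtain l where "l \<in> C" "eval_lit F R (\<lambda>x. eval_trm F e (\<tau> x)) l"
    using assms(2) unfolding sat_clause_def by blast
  then show "\<exists>l\<in>clause_subst \<tau> C. eval_lit F R e l"
    unfolding clause_subst_def by (auto simp: eval_lit_subst)
qed

theorem theorem1:
  fixes X1 X2 :: "('p, 'f, 'v) clause set"
    and C1 C2 :: "('p, 'f, 'v) clause"
    and r s :: "('p, 'f, 'v) lit"
    and \<sigma>1 \<sigma>2 \<sigma> :: "('f, 'v) subst"
  assumes "finite X1" and "finite X2"
    and "\<forall>C\<in>X1 \<union> X2. is_clause C"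
    and "implicate_via (\<pi> X1 \<union> X2) \<sigma>1 C1"
    and "implicate_via (\<pi> X1 \<union> X2) \<sigma>2 C2"
    and "r \<in> C1" and "s \<in> C2"
    and "complementary_via \<sigma> r s"
    and "subst_comp \<sigma>1 \<sigma> = subst_comp \<sigma>2 \<sigma>"
    and "fundamental (resolvent \<sigma> C1 r C2 s)"
  shows "implicate (X1 \<union> X2) (resolvent \<sigma> C1 r C2 s)"
proof -
  have c1: "is_clause C1" "entails (clauses_subst \<sigma>1 (\<pi> X1 \<union> X2)) C1"
    using assms(4) unfolding implicate_via_def by auto
  have c2: "is_clause C2" "entails (clauses_subst \<sigma>2 (\<pi> X1 \<union> X2)) C2"
    using assms(5) unfolding implicate_via_def by auto
  have fin: "finite (resolvent \<sigma> C1 r C2 s)"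
    using c1(1) c2(1) unfolding is_clause_def resolvent_def clause_subst_def by auto
  have "entails (clauses_subst Var (X1 \<union> X2)) (resolvent \<sigma> C1 r C2 s)"
    unfolding entails_def
  proof (intro allI impI)
    fix D :: "('p, 'f, 'v) univ set" and F R
    assume wf: "wf_interp D F" and satX: "\<forall>c\<in>clauses_subst Var (X1 \<union> X2). sat_clause D F R c"
    have "\<forall>c\<in>X1 \<union> X2. sat_clause D F R c"
    proof
      fix c assume "c \<in> X1 \<union> X2"
      then have "sat_clause D F R (clause_subst Var c)"
        using satX unfolding clauses_subst_def by auto
      moreover have "\<And>l. lit_subst Var l = l" by (rule lit_subst_Var)
      then have "clause_subst Var c = c" unfolding clause_subst_def by (simp add: lit_subst_Var)
      ultimately show "sat_clause D F R c" by simp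
    qed
    then have satX1: "\<forall>c\<in>X1. sat_clause D F R c" and satX2: "\<forall>c\<in>X2. sat_clause D F R c"
      by auto
    have satPi: "\<forall>c\<in>\<pi> X1. sat_clause D F R c"
    proof
      fix c assume "c \<in> \<pi> X1"
      then obtain \<tau> where "entails (clauses_subst \<tau> X1) c"
        unfolding prime_implicates_def prime_implicate_def implicate_def implicate_via_def
        by auto
      moreover have "\<forall>c\<in>clauses_subst \<tau> X1. sat_clause D F R c"
        using satX1 sat_subst[OF wf] unfolding clauses_subst_def by auto
      ultimately show "sat_clause D F R c" using wf unfolding entails_def by blast
    qed
    have "\<forall>c\<in>\<pi> X1 \<union> X2. sat_clause D F R c" using satPi satX2 by auto
    then have s1: "\<forall>c\<in>clauses_subst \<sigma>1 (\<pi> X1 \<union> X2). sat_clause D F R c"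
      and s2: "\<forall>c\<in>clauses_subst \<sigma>2 (\<pi> X1 \<union> X2). sat_clause D F R c"
      using sat_subst[OF wf] unfolding clauses_subst_def by auto
    have "sat_clause D F R C1" using c1(2) s1 wf unfolding entails_def by blast
    then have a1: "sat_clause D F R (clause_subst \<sigma> C1)" using sat_subst[OF wf] by blast
    have "sat_clause D F R C2" using c2(2) s2 wf unfolding entails_def by blast
    then have a2: "sat_clause D F R (clause_subst \<sigma> C2)" using sat_subst[OF wf] by blast
    show "sat_clause D F R (resolvent \<sigma> C1 r C2 s)"
      unfolding sat_clause_def
    proof (intro allI impI)
      fix e :: "'v \<Rightarrow> ('p, 'f, 'v) univ" assume e: "range e \<subseteq> D"
      show "\<exists>l\<in>resolvent \<sigma> C1 r C2 s. eval_lit F R e l"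
      proof (cases "eval_lit F R e (lit_subst \<sigma> r)")
        case True
        obtain l where "l \<in> clause_subst \<sigma> C2" "eval_lit F R e l"
          using a2 e unfolding sat_clause_def by blast
        moreover have "l \<noteq> negate (lit_subst \<sigma> r)"
          using True calculation(2) eval_lit_negate by metis
        ultimately show ?thesis unfolding resolvent_def by blast
      next
        case False
        obtain l where "l \<in> clause_subst \<sigma> C1" "eval_lit F R e l"
          using a1 e unfolding sat_clause_def by blast
        moreover have "l \<noteq> lit_subst \<sigma> r" using False calculation(2) by metis
        ultimately show ?thesis unfolding resolvent_def by blast
      qed
    qed
  qed
  then show ?thesis
    unfolding implicate_def implicate_via_def is_clause_def using fin assms(10) by blast
qed

end
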